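(* With the notation of the context, if $Q(\alpha_i)=Q^*(\alpha_i)=\lg\frac{N+i}{N+i-1}$ for all $1\le i\le N$, then $L(Q)=H(p)+D(p\|q)$.
   Context: Let $\mathcal S$ be a finite alphabet with $|\mathcal S|\ge2$, $p$ a probability distribution on $\mathcal S$ with $p(s)>0$, $N_s$ ($s\in\mathcal S$) positive integers, $N=\sum_sN_s$, $q(s)=N_s/N$, $\lg=\log_2$, and $\kappa_s=\lceil\lg(N/N_s)\rceil$ (so $\kappa_s\ge1$ and $N\le 2^{\kappa_s}N_s<2N$). Let $\alpha_1,\dots,\alpha_N$ be the states. For a probability distribution $Q$ on $\{\alpha_1,\dots,\alpha_N\}$ define $L(Q)=\sum_s p(s)\sum_{i=1}^N Q(\alpha_i)\ell_s(i)$, where $\ell_s(i)=\kappa_s-1$ if $i\le 2^{\kappa_s}N_s-N$ and $\ell_s(i)=\kappa_s$ otherwise. (This is the average code length of the Yokoo–Dubé-type sAEDS, whose state $\alpha_i$ encodes $s$ with $\ell_s(i)$ bits, when $Q$ is its stationary distribution with states indexed in non-increasing order of $Q$.) $Q^*(\alpha_i)=\lg\frac{N+i}{N+i-1}$, which sums to 1. $H(p)=-\sum p\lg p$, $D(p\|q)=\sum p\lg(p/q)$. *)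

theory Defs
  imports Complex_Main
begin

definition totN :: "('s::finite \<Rightarrow> nat) \<Rightarrow> nat" where
  "totN Ns = (\<Sum>s\<in>UNIV. Ns s)"

definition qdist :: "('s::finite \<Rightarrow> nat) \<Rightarrow> 's \<Rightarrow> real" where
  "qdist Ns s = real (Ns s) / real (totN Ns)"

definition kappa :: "('s::finite \<Rightarrow> nat) \<Rightarrow> 's \<Rightarrow> nat" where
  "kappa Ns s = nat \<lceil>log 2 (real (totN Ns) / real (Ns s))\<rceil>"

definition ell :: "('s::finite \<Rightarrow> nat) \<Rightarrow> 's \<Rightarrow> nat \<Rightarrow> real" where
  "ell Ns s i = (if int i \<le> 2 ^ kappa Ns s * int (Ns s) - int (totN Ns)
                 then real (kappa Ns s) - 1 else real (kappa Ns s))"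

text \<open>Average code length L(Q); Q i is the probability of state alpha_i (1 \<le> i \<le> N).\<close>
definition avg_len :: "('s::finite \<Rightarrow> real) \<Rightarrow> ('s \<Rightarrow> nat) \<Rightarrow> (nat \<Rightarrow> real) \<Rightarrow> real" where
  "avg_len p Ns Q = (\<Sum>s\<in>UNIV. p s * (\<Sum>i=1..totN Ns. Q i * ell Ns s i))"

definition Qstar :: "nat \<Rightarrow> nat \<Rightarrow> real" where
  "Qstar N i = log 2 ((real N + real i) / (real N + real i - 1))"

definition entropy2 :: "('s::finite \<Rightarrow> real) \<Rightarrow> real" where
  "entropy2 p = - (\<Sum>s\<in>UNIV. p s * log 2 (p s))"

definition kl_div2 :: "('s::finite \<Rightarrow> real) \<Rightarrow> ('s \<Rightarrow> real) \<Rightarrow> real" where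
  "kl_div2 p q = (\<Sum>s\<in>UNIV. p s * log 2 (p s / q s))"

end

theory Submission
  imports Defs
begin

lemma telescope:
  fixes N :: nat assumes "N \<ge> 1"
  shows "(\<Sum>i=1..m. Qstar N i) = log 2 ((real N + real m) / real N)"
proof (induction m)
  case 0 then show ?case using assms by simp
next
  case (Suc m)
  have "(\<Sum>i=1..Suc m. Qstar N i) = log 2 ((real N + real m) / real N) + Qstar N (Suc m)"
    using Suc by simp
  also have "\<dots> = log 2 ((real N + real m) / real N * ((real N + real (Suc m)) / (real N + real (Suc m) - 1)))"
    unfolding Qstar_def using assms by (subst log_mult) auto
  also have "(real N + real m) / real N * ((real N + real (Suc m)) / (real N + real (Suc m) - 1))
      = (real N + real (Suc m)) / real N"
  proof -
    have e: "real N + real (Suc m) - 1 = real N + real m" by simp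
    have "real N + real m > 0" using assms by simp
    have g: "\<And>a b n::real. a > 0 \<Longrightarrow> n > 0 \<Longrightarrow> a / n * (b / a) = b / n" by simp
    show ?thesis unfolding e by (rule g) (use assms \<open>real N + real m > 0\<close> in auto)
  qed
  finally show ?case .
qed

lemma per_symbol:
  fixes Ns :: "'s::finite \<Rightarrow> nat"
  assumes pos: "\<And>s. Ns s > 0"
  shows "(\<Sum>i=1..totN Ns. Qstar (totN Ns) i * ell Ns s i) = log 2 (real (totN Ns) / real (Ns s))"
proof -
  define N where "N = totN Ns"
  define k where "k = kappa Ns s"
  have NsN: "Ns s \<le> N" unfolding N_def totN_def
    by (rule member_le_sum) auto
  have Npos: "N \<ge> 1" using pos[of s] NsN by linarith
  define x where "x = real N / real (Ns s)"
  have x1: "x \<ge> 1" unfolding x_def using NsN pos[of s] by (simp add: field_simps)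
  have lx: "log 2 x \<ge> 0" using x1 by simp
  have kdef: "k = nat \<lceil>log 2 x\<rceil>" unfolding k_def kappa_def x_def N_def by simp
  have kr: "real k = of_int \<lceil>log 2 x\<rceil>" using kdef lx by simp
  have k1: "log 2 x \<le> real k" using kr by linarith
  have k2: "real k < log 2 x + 1" using kr by linarith
  have "x = 2 powr log 2 x" using x1 by simp
  also have "\<dots> \<le> 2 powr real k" using k1 by (intro powr_mono) auto
  finally have "x \<le> 2 powr real k" .
  hence xa: "x \<le> 2 ^ k" by (simp add: powr_realpow)
  have "2 powr real k < 2 powr (log 2 x + 1)" using k2 by simp
  also have "\<dots> = 2 * x" using x1 by (simp add: powr_add)
  finally have xb: "2 ^ k < 2 * x" by (simp add: powr_realpow)
  have Nr1: "real N \<le> 2 ^ k * real (Ns s)" using xa pos[of s] unfolding x_def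
    by (simp add: field_simps)
  have Nr2: "2 ^ k * real (Ns s) < 2 * real N" using xb pos[of s] unfolding x_def
    by (simp add: field_simps)
  define M where "M = 2 ^ k * int (Ns s) - int N"
  have cast: "real_of_int M = 2 ^ k * real (Ns s) - real N" unfolding M_def by simp
  have M0: "M \<ge> 0" using cast Nr1 by (smt (verit) of_int_less_iff of_int_0)
  have MN: "M < int N" using cast Nr2 by (smt (verit) of_int_less_iff of_int_of_nat_eq)
  define m where "m = nat M"
  have mN: "m \<le> N" using MN m_def by linarith
  have mreal: "real N + real m = 2 ^ k * real (Ns s)"
  proof -
    have "int N + int m = 2 ^ k * int (Ns s)" using M0 unfolding m_def M_def by simp
    hence "real_of_int (int N + int m) = real_of_int (2 ^ k * int (Ns s))" by simp
    thus ?thesis by simp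
  qed
  have ell_eq: "\<And>i. ell Ns s i = real k - (if i \<le> m then 1 else 0)"
    unfolding ell_def k_def[symmetric] N_def[symmetric] M_def[symmetric] m_def using M0 by auto
  have sum1: "(\<Sum>i=1..N. Qstar N i) = 1"
    using telescope[OF Npos, of N] Npos by simp
  have split: "(\<Sum>i=1..N. Qstar N i * (if i \<le> m then 1 else 0)) = (\<Sum>i=1..m. Qstar N i)"
  proof -
    have "(\<Sum>i=1..N. Qstar N i * (if i \<le> m then 1 else 0)) = (\<Sum>i\<in>{1..N} \<inter> {i. i \<le> m}. Qstar N i)"
      by (subst sum.inter_restrict) (auto intro: sum.cong)
    also have "{1..N} \<inter> {i. i \<le> m} = {1..m}" using mN by auto
    finally show ?thesis .
  qed
  have "(\<Sum>i=1..N. Qstar N i * ell Ns s i) = real k * (\<Sum>i=1..N. Qstar N i) - (\<Sum>i=1..N. Qstar N i * (if i \<le> m then 1 else 0))"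
    unfolding ell_eq by (simp add: right_diff_distrib sum_subtractf sum_distrib_left mult.commute)
  also have "\<dots> = real k - log 2 ((real N + real m) / real N)"
    using sum1 split telescope[OF Npos, of m] by simp
  also have "log 2 ((real N + real m) / real N) = real k - log 2 x"
  proof -
    have "(real N + real m) / real N = 2 ^ k / x" using mreal pos[of s] Npos unfolding x_def
      by (simp add: field_simps)
    thus ?thesis using x1 by (simp add: log_divide log_nat_power)
  qed
  finally show ?thesis unfolding x_def N_def by simp
qed

theorem lemma1:
  fixes p :: "'s::finite \<Rightarrow> real" and Ns :: "'s \<Rightarrow> nat" and Q :: "nat \<Rightarrow> real"
  assumes "card (UNIV :: 's set) \<ge> 2"
    and "\<And>s. p s > 0"
    and "(\<Sum>s\<in>UNIV. p s) = 1"
    and "\<And>s. Ns s > 0"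
    and "\<And>i. 1 \<le> i \<Longrightarrow> i \<le> totN Ns \<Longrightarrow> Q i = Qstar (totN Ns) i"
  shows "avg_len p Ns Q = entropy2 p + kl_div2 p (qdist Ns)"
proof -
  have NsN: "\<And>s. Ns s \<le> totN Ns" unfolding totN_def by (rule member_le_sum) auto
  have Npos: "real (totN Ns) > 0" using NsN assms(4) by (metis of_nat_0_less_iff order_less_le_trans)
  have "avg_len p Ns Q = (\<Sum>s\<in>UNIV. p s * log 2 (real (totN Ns) / real (Ns s)))"
    unfolding avg_len_def
  proof (rule sum.cong[OF refl])
    fix s
    have "(\<Sum>i=1..totN Ns. Q i * ell Ns s i) = (\<Sum>i=1..totN Ns. Qstar (totN Ns) i * ell Ns s i)"
      using assms(5) by (intro sum.cong) auto
    thus "p s * (\<Sum>i=1..totN Ns. Q i * ell Ns s i) = p s * log 2 (real (totN Ns) / real (Ns s))"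
      using per_symbol[where Ns=Ns and s=s] assms(4) by simp
  qed
  also have "\<dots> = (\<Sum>s\<in>UNIV. - (p s * log 2 (p s)) + p s * log 2 (p s / qdist Ns s))"
  proof (rule sum.cong[OF refl])
    fix s
    have ps: "p s > 0" using assms(2) by simp
    have q: "qdist Ns s > 0" unfolding qdist_def using assms(4)[of s] Npos by simp
    have "log 2 (p s / qdist Ns s) = log 2 (p s) - log 2 (qdist Ns s)" using ps q by (simp add: log_divide)
    moreover have "log 2 (qdist Ns s) = - log 2 (real (totN Ns) / real (Ns s))"
      unfolding qdist_def using assms(4)[of s] Npos by (simp add: log_divide)
    ultimately show "p s * log 2 (real (totN Ns) / real (Ns s)) = - (p s * log 2 (p s)) + p s * log 2 (p s / qdist Ns s)"
      by (simp add: algebra_simps)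
  qed
  also have "\<dots> = entropy2 p + kl_div2 p (qdist Ns)"
    unfolding entropy2_def kl_div2_def by (simp add: sum.distrib sum_negf sum_subtractf)
  finally show ?thesis .
qed

end
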